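(* Let $R$ be a field having an element of infinite multiplicative order, and let $L\subseteq R[x]$ be the set of polynomials of degree $1$. Then every $\ell\in L$ is $2$-connected with $x$ through $L$, and consequently any two elements of $L$ are $4$-connected through $L$.
   Context: For a ring $S$ and $\ell,\ell'\in S$, $\ell\sim\ell'$ (1-connected) means: for all positive integers $m,n$ with $(\ell-\ell')\mid(\ell^m-(\ell')^n)$ we have $m=n$ (this relation is symmetric). $\ell$ and $\ell'$ are $k$-connected through a subset $T\subseteq S$ if there are $l_0,\dots,l_k\in S$ with $l_0=\ell$, $l_k=\ell'$, $l_1,\dots,l_{k-1}\in T$, and $l_{i-1}\sim l_i$ for $i=1,\dots,k$. *)

theory Defs
  imports "HOL-Computational_Algebra.Polynomial"
begin

definition one_connected :: "'a::comm_ring_1 \<Rightarrow> 'a \<Rightarrow> bool" where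
  "one_connected l l' \<longleftrightarrow>
     (\<forall>m n::nat. 0 < m \<longrightarrow> 0 < n \<longrightarrow> (l - l') dvd (l ^ m - l' ^ n) \<longrightarrow> m = n)"

definition k_connected_through :: "nat \<Rightarrow> 'a::comm_ring_1 set \<Rightarrow> 'a \<Rightarrow> 'a \<Rightarrow> bool" where
  "k_connected_through k T l l' \<longleftrightarrow>
     (\<exists>c :: nat \<Rightarrow> 'a. c 0 = l \<and> c k = l' \<and> (\<forall>i. 0 < i \<and> i < k \<longrightarrow> c i \<in> T) \<and>
        (\<forall>i. 1 \<le> i \<and> i \<le> k \<longrightarrow> one_connected (c (i - 1)) (c i)))"

end

theory Submission
  imports Defs
begin

definition inford :: "'a::field \<Rightarrow> bool" where
  "inford v \<longleftrightarrow> v \<noteq> 0 \<and> (\<forall>n::nat. 0 < n \<longrightarrow> v ^ n \<noteq> 1)"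

lemma pow_eq_inford:
  fixes v :: "'a::field"
  assumes "inford v" "v ^ m = v ^ n"
  shows "m = n"
proof (rule ccontr)
  assume ne: "m \<noteq> n"
  have v0: "v \<noteq> 0" using assms(1) by (simp add: inford_def)
  { fix m n :: nat assume "m < n" "v ^ m = v ^ n"
    then have "v ^ m * v ^ (n - m) = v ^ m * 1"
      by (metis le_add_diff_inverse less_imp_le power_add mult_1_right)
    then have "v ^ (n - m) = 1" using v0 by simp
    with \<open>m < n\<close> assms(1) have False by (simp add: inford_def) }
  with ne assms(2) show False by (metis linorder_neqE_nat)
qed

lemma conn_by_point:
  fixes p q :: "'a::field poly"
  assumes "poly p r = v" "poly q r = v" "inford v"
  shows "one_connected p q"
  unfolding one_connected_def
proof (intro allI impI)
  fix m n :: nat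
  assume "0 < m" "0 < n" "(p - q) dvd (p ^ m - q ^ n)"
  then obtain g where g: "p ^ m - q ^ n = (p - q) * g" by (auto elim: dvdE)
  have "poly (p ^ m - q ^ n) r = 0" using g assms by simp
  then have "v ^ m = v ^ n" using assms by (simp add: poly_power)
  then show "m = n" using pow_eq_inford assms(3) by blast
qed

lemma deg1_poly:
  fixes l :: "'a::field poly"
  assumes "degree l = 1"
  shows "poly l t = coeff l 0 + t * coeff l 1" "coeff l 1 \<noteq> 0"
proof -
  have "l = [:coeff l 0, coeff l 1:]"
    by (rule poly_eqI) (use assms in \<open>auto simp: coeff_pCons split: nat.splits intro: coeff_eq_0\<close>)
  then show "poly l t = coeff l 0 + t * coeff l 1"
    by (metis add.right_neutral mult.commute mult_zero_right poly_pCons poly_0)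
  show "coeff l 1 \<noteq> 0" using assms by (metis degree_0 leading_coeff_0_iff zero_neq_one)
qed

lemma mid:
  fixes l :: "'a::field poly" and a :: 'a
  assumes "inford a" "degree l = 1"
  shows "\<exists>m. degree m = 1 \<and> one_connected l m \<and> one_connected m l
            \<and> one_connected m [:0,1:] \<and> one_connected [:0,1:] m"
proof -
  define s where "s = (a - coeff l 0) / coeff l 1"
  have ls: "poly l s = a" using deg1_poly[OF assms(2)] by (simp add: s_def)
  have a0: "a \<noteq> 0" using assms(1) by (simp add: inford_def)
  have ik: "inford (a ^ k)" if "0 < k" for k :: nat
    using assms(1) that by (auto simp: inford_def power_mult[symmetric])
  have d23: "a ^ 2 \<noteq> a ^ 3" using pow_eq_inford[OF assms(1), of 2 3] by auto
  have d2: "a ^ 2 \<noteq> a" using pow_eq_inford[OF assms(1), of 2 1] by auto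
  have d3: "a ^ 3 \<noteq> a" using pow_eq_inford[OF assms(1), of 3 1] by auto
  obtain r where r: "r \<noteq> s" "r \<noteq> a" "inford r"
    using d23 d2 d3 ik[of 2] ik[of 3] by (metis zero_less_numeral)
  define c where "c = (r - a) / (r - s)"
  have c0: "c \<noteq> 0" using r by (simp add: c_def)
  define m where "m = [: r - c * r, c :]"
  have dm: "degree m = 1" using c0 by (simp add: m_def)
  have mr: "poly m r = r" by (simp add: m_def algebra_simps)
  have cc: "c * (r - s) = r - a" using r by (simp add: c_def)
  have "poly m s = r - c * (r - s)" by (simp add: m_def algebra_simps)
  then have ms: "poly m s = a" using cc by simp
  have xr: "poly [:0,1:] r = r" by simp
  show ?thesis
    using dm conn_by_point[OF ls ms assms(1)] conn_by_point[OF ms ls assms(1)]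
      conn_by_point[OF mr xr r(3)] conn_by_point[OF xr mr r(3)] by blast
qed

theorem theorem2p9:
  fixes L :: "'a::field poly set"
  assumes inf_order: "\<exists>a::'a. a \<noteq> 0 \<and> (\<forall>n::nat. 0 < n \<longrightarrow> a ^ n \<noteq> 1)"
    and L_def: "L = {p. degree p = 1}"
  shows "(\<forall>l\<in>L. k_connected_through 2 L l [:0, 1:]) \<and>
         (\<forall>l\<in>L. \<forall>l'\<in>L. k_connected_through 4 L l l')"
proof -
  obtain a :: 'a where a: "inford a" using inf_order by (auto simp: inford_def)
  have xL: "[:0,1:] \<in> L" using L_def by simp
  have A: "\<forall>l\<in>L. k_connected_through 2 L l [:0, 1:]"
  proof
    fix l assume "l \<in> L"
    then obtain m where m: "degree m = 1" "one_connected l m" "one_connected m [:0,1:]"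
      using mid[OF a] L_def by blast
    show "k_connected_through 2 L l [:0, 1:]"
      unfolding k_connected_through_def
      apply (rule exI[of _ "\<lambda>i. if i = 0 then l else if i = 1 then m else [:0,1:]"])
      using m L_def by (auto simp: le_Suc_eq numeral_2_eq_2)
  qed
  have B: "\<forall>l\<in>L. \<forall>l'\<in>L. k_connected_through 4 L l l'"
  proof (intro ballI)
    fix l l' assume "l \<in> L" "l' \<in> L"
    then have dl: "degree l = 1" "degree l' = 1" using L_def by auto
    obtain m where m: "degree m = 1" "one_connected l m" "one_connected m [:0,1:]"
      using mid[OF a dl(1)] by blast
    obtain m' where m': "degree m' = 1" "one_connected [:0,1:] m'" "one_connected m' l'"
      using mid[OF a dl(2)] by blast
    define cs where "cs = [l, m, [:0,1:], m', l']"
    have mem: "cs ! i \<in> L" if "0 < i \<and> i < 4" for i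
    proof -
      from that have "i = 1 \<or> i = 2 \<or> i = 3" by auto
      then show ?thesis using m m' xL L_def by (auto simp: cs_def)
    qed
    have con: "one_connected (cs ! (i - 1)) (cs ! i)" if "1 \<le> i \<and> i \<le> 4" for i
    proof -
      from that have "i = 1 \<or> i = 2 \<or> i = 3 \<or> i = 4" by auto
      then show ?thesis using m m' by (auto simp: cs_def)
    qed
    show "k_connected_through 4 L l l'"
      unfolding k_connected_through_def
      by (rule exI[of _ "\<lambda>i. cs ! i"]) (use mem con in \<open>simp add: cs_def\<close>)
  qed
  show ?thesis using A B by blast
qed

end
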